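(* The rules (A1)–(A8) for approximate exclusion atoms are sound: if an approximate exclusion atom $\varphi$ is derivable from a set $\Sigma$ of approximate exclusion atoms using (A1)–(A8), then every team satisfying all atoms of $\Sigma$ satisfies $\varphi$.
   Context: A team $T$ is a finite set of assignments $s:\mathcal{V}\to M$ ($\mathcal{V}$ a set of variables, $M$ a set of values). Letters $x,y,z,u,v,w,\dots$ denote finite tuples of variables; juxtaposition denotes concatenation; $s(x)=\langle s(x_1),\dots,s(x_n)\rangle$. For $|x|=|y|$, $T\models x|y$ iff $s_1(x)\neq s_2(y)$ for all $s_1,s_2\in T$. For a real $0\le p\le 1$, the approximate exclusion atom $x|_p y$ is satisfied, $T\models x|_py$, iff there is $T'\subseteq T$ with $|T'|\le p\cdot|T|$ and $T\setminus T'\models x|y$. The rules (schemata over tuples, atoms well-formed) are: (A1) $x|_px\vdash y|_0z$ for $p<1$; (A2) $x|_py\vdash y|_px$; (A3) $x|_py\vdash xu|_pyv$; (A4) $xuu|_pyvv\vdash xu|_pyv$; (A5) $xyz|_puvw\vdash xzy|_puwv$ where $|x|=|u|$, $|y|=|v|$; (A6) $xw|_pyw\vdash zz|_pxy$; (A7) $x|_qy\vdash x|_py$ for $q\le p\le 1$; (A8) $\vdash x|_1y$. *)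

theory Defs
  imports Main "HOL.Real"
begin

text \<open>An approximate exclusion atom x |_p y is
represented as the triple (x, p, y).\<close>

type_synonym 'v atom = "'v list \<times> real \<times> 'v list"

definition excl :: "('v \<Rightarrow> 'm) set \<Rightarrow> 'v list \<Rightarrow> 'v list \<Rightarrow> bool" where
  "excl T x y \<longleftrightarrow> (\<forall>s1\<in>T. \<forall>s2\<in>T. map s1 x \<noteq> map s2 y)"

definition approx_excl :: "('v \<Rightarrow> 'm) set \<Rightarrow> 'v list \<Rightarrow> real \<Rightarrow> 'v list \<Rightarrow> bool" where
  "approx_excl T x p y \<longleftrightarrow>
     (\<exists>T'. T' \<subseteq> T \<and> real (card T') \<le> p * real (card T) \<and> excl (T - T') x y)"

fun team_sat :: "('v \<Rightarrow> 'm) set \<Rightarrow> 'v atom \<Rightarrow> bool" where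
  "team_sat T (x, p, y) = approx_excl T x p y"

fun wf_atom :: "'v atom \<Rightarrow> bool" where
  "wf_atom (x, p, y) \<longleftrightarrow> length x = length y \<and> 0 \<le> p \<and> p \<le> 1"

inductive derivable :: "'v atom set \<Rightarrow> 'v atom \<Rightarrow> bool" for S where
  hyp: "\<phi> \<in> S \<Longrightarrow> derivable S \<phi>"
| A1: "derivable S (x, p, x) \<Longrightarrow> p < 1 \<Longrightarrow> length y = length z \<Longrightarrow> derivable S (y, 0, z)"
| A2: "derivable S (x, p, y) \<Longrightarrow> derivable S (y, p, x)"
| A3: "derivable S (x, p, y) \<Longrightarrow> length u = length v \<Longrightarrow> derivable S (x @ u, p, y @ v)"
| A4: "derivable S (x @ u @ u, p, y @ v @ v) \<Longrightarrow> length x = length y \<Longrightarrow> length u = length v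
        \<Longrightarrow> derivable S (x @ u, p, y @ v)"
| A5: "derivable S (x @ y @ z, p, u @ v @ w) \<Longrightarrow> length x = length u \<Longrightarrow> length y = length v
        \<Longrightarrow> length z = length w \<Longrightarrow> derivable S (x @ z @ y, p, u @ w @ v)"
| A6: "derivable S (x @ w, p, y @ w) \<Longrightarrow> length x = length y \<Longrightarrow> length z = length x
        \<Longrightarrow> derivable S (z @ z, p, x @ y)"
| A7: "derivable S (x, q, y) \<Longrightarrow> q \<le> p \<Longrightarrow> p \<le> 1 \<Longrightarrow> derivable S (x, p, y)"
| A8: "length x = length y \<Longrightarrow> derivable S (x, 1, y)"

end

theory Submission
  imports Defs
begin

lemma map_app_eq:
  assumes "map f (a @ b) = map g (c @ d)" "length b = length d"
  shows "map f a = map g c \<and> map f b = map g d"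
proof -
  have e: "map f a @ map f b = map g c @ map g d" using assms(1) by simp
  have "length (map f a @ map f b) = length (map g c @ map g d)" using e by simp
  hence "length (map f a) = length (map g c)" using assms(2) by simp
  thus ?thesis using e append_eq_append_conv by blast
qed

theorem lemma3:
  fixes S :: "'v atom set" and \<phi> :: "'v atom" and T :: "('v \<Rightarrow> 'm) set"
  assumes "\<forall>\<psi>\<in>S. wf_atom \<psi>"
    and "derivable S \<phi>"
    and "finite T"
    and "\<forall>\<psi>\<in>S. team_sat T \<psi>"
  shows "team_sat T \<phi>"
  using assms(2)
proof (induction rule: derivable.induct)
  case (hyp \<phi>)
  then show ?case using assms(4) by blast
next
  case (A1 x p y z)
  then obtain T' where T': "T' \<subseteq> T" "real (card T') \<le> p * real (card T)" "excl (T - T') x x"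
    by (auto simp: approx_excl_def)
  have "T - T' = {}" using T'(3) unfolding excl_def by blast
  hence "T' = T" using T'(1) by blast
  hence "real (card T) \<le> p * real (card T)" using T'(2) by simp
  have "card T = 0"
  proof (rule ccontr)
    assume "card T \<noteq> 0"
    hence "real (card T) > 0" by simp
    hence "p * real (card T) < real (card T)" using A1(2) by simp
    thus False using \<open>real (card T) \<le> p * real (card T)\<close> by simp
  qed
  hence "T = {}" using assms(3) by simp
  then show ?case by (auto simp: approx_excl_def excl_def)
next
  case (A2 x p y)
  then obtain T' where T': "T' \<subseteq> T" "real (card T') \<le> p * real (card T)" "excl (T - T') x y"
    by (auto simp: approx_excl_def)
  have "excl (T - T') y x" using T'(3) unfolding excl_def by metis
  then show ?case using T' by (auto simp: approx_excl_def)
next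
  case (A3 x p y u v)
  then obtain T' where T': "T' \<subseteq> T" "real (card T') \<le> p * real (card T)" "excl (T - T') x y"
    by (auto simp: approx_excl_def)
  have "excl (T - T') (x@u) (y@v)" unfolding excl_def
  proof (intro ballI notI)
    fix s1 s2 assume s: "s1 \<in> T - T'" "s2 \<in> T - T'" and e: "map s1 (x@u) = map s2 (y@v)"
    have "map s1 x = map s2 y" using map_app_eq[OF e A3(2)] by blast
    thus False using T'(3) s unfolding excl_def by blast
  qed
  then show ?case using T' by (auto simp: approx_excl_def)
next
  case (A4 x u p y v)
  then obtain T' where T': "T' \<subseteq> T" "real (card T') \<le> p * real (card T)" "excl (T - T') (x@u@u) (y@v@v)"
    by (auto simp: approx_excl_def)
  have "excl (T - T') (x@u) (y@v)" unfolding excl_def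
  proof (intro ballI notI)
    fix s1 s2 assume s: "s1 \<in> T - T'" "s2 \<in> T - T'" and e: "map s1 (x@u) = map s2 (y@v)"
    have "map s1 x = map s2 y \<and> map s1 u = map s2 v" using map_app_eq[OF e A4(3)] .
    hence "map s1 (x@u@u) = map s2 (y@v@v)" by simp
    thus False using T'(3) s unfolding excl_def by blast
  qed
  then show ?case using T' by (auto simp: approx_excl_def)
next
  case (A5 x y z p u v w)
  then obtain T' where T': "T' \<subseteq> T" "real (card T') \<le> p * real (card T)" "excl (T - T') (x@y@z) (u@v@w)"
    by (auto simp: approx_excl_def)
  have "excl (T - T') (x@z@y) (u@w@v)" unfolding excl_def
  proof (intro ballI)
    fix s1 s2 assume s: "s1 \<in> T - T'" "s2 \<in> T - T'"
    show "map s1 (x@z@y) \<noteq> map s2 (u@w@v)"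
    proof
      assume "map s1 (x@z@y) = map s2 (u@w@v)"
      then have e: "map s1 (x@(z@y)) = map s2 (u@(w@v))" by simp
      have l: "length (z@y) = length (w@v)" using A5.hyps by simp
      have 1: "map s1 x = map s2 u" and e2: "map s1 (z@y) = map s2 (w@v)"
        using map_app_eq[OF e l] by blast+
      have "map s1 z = map s2 w \<and> map s1 y = map s2 v" using map_app_eq[OF e2] A5.hyps by simp
      then have "map s1 x = map s2 u \<and> map s1 z = map s2 w \<and> map s1 y = map s2 v"
        using 1 by blast
      then have "map s1 (x@y@z) = map s2 (u@v@w)" by simp
      then show False using T'(3) s unfolding excl_def by blast
    qed
  qed
  then show ?case using T' by (auto simp: approx_excl_def)
next
  case (A6 x w p y z)
  then obtain T' where T': "T' \<subseteq> T" "real (card T') \<le> p * real (card T)" "excl (T - T') (x@w) (y@w)"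
    by (auto simp: approx_excl_def)
  have "excl (T - T') (z@z) (x@y)" unfolding excl_def
  proof (intro ballI)
    fix s1 s2 assume s: "s1 \<in> T - T'" "s2 \<in> T - T'"
    show "map s1 (z@z) \<noteq> map s2 (x@y)"
    proof
      assume "map s1 (z@z) = map s2 (x@y)"
      then have "map s1 z = map s2 x \<and> map s1 z = map s2 y"
        using A6.hyps map_app_eq[of s1 z z s2 x y] by (metis)
      then have "map s2 (x@w) = map s2 (y@w)" by (metis map_append)
      then show False using T'(3) s unfolding excl_def by blast
    qed
  qed
  then show ?case using T' by (auto simp: approx_excl_def)
next
  case (A7 x q y p)
  then obtain T' where T': "T' \<subseteq> T" "real (card T') \<le> q * real (card T)" "excl (T - T') x y"
    by (auto simp: approx_excl_def)
  have "q * real (card T) \<le> p * real (card T)" using A7.hyps by (simp add: mult_right_mono)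
  then show ?case using T' by (auto simp: approx_excl_def)
next
  case (A8 x y)
  show ?case unfolding team_sat.simps approx_excl_def
    by (rule exI[of _ T]) (simp add: excl_def)
qed

end
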